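(* Let $d\ge 2$, $\bm{\mu}=(\mu_1,\dots,\mu_d)^\top\in\mathbb{R}^d$, let $\bm{\Sigma}$ be a positive definite $d\times d$ matrix, $t\in\mathbb{R}$ and $\lambda>0$ with $(\min_{1\le i\le d}\mu_i-t)_-\le\lambda$. Let $\bm{e}=(1,\dots,1)^\top$ and $\mathcal{W}^+=\{\bm{w}\in\mathbb{R}^d:\bm{w}^\top\bm{e}=1,\ \bm{w}\ge 0\}$. Let $\mathcal{M}(\bm{\mu},\bm{\Sigma})$ be the set of probability distributions $G$ on $\mathbb{R}^d$ of a random vector $\bm{X}$ with $\mathbb{E}^G[\bm{X}]=\bm{\mu}$ and $\mathrm{Cov}^G[\bm{X}]=\bm{\Sigma}$, and $\mathcal{M}_S(\bm{\mu},\bm{\Sigma})$ its subset of symmetric distributions. For $\mathcal{M}\in\{\mathcal{M}(\bm{\mu},\bm{\Sigma}),\mathcal{M}_S(\bm{\mu},\bm{\Sigma})\}$ and $\bm{w}\in\mathcal{W}^+$, let $\mathcal{M}_{\bm{w},\lambda}=\{G\in\mathcal{M}:\mathbb{E}^G[(\bm{w}^\top\bm{X}-t)_-]\le\lambda\}$, and consider the problem $\min_{\bm{w}\in\mathcal{W}^+}\sup_{G\in\mathcal{M}_{\bm{w},\lambda}}\mathbb{E}^G[(\bm{w}^\top\bm{X}-t)_+^2]$. For $a\in\mathbb{R}$, $s>0$ define $h_{\lambda,t}(a,s)=\sup_{F\in\mathcal{L}_\lambda(a,s)}\mathbb{E}^F[(X-t)_+^2]$ and $h_{S,\lambda,t}(a,s)=\sup_{F\in\mathcal{L}_{S,\lambda}(a,s)}\mathbb{E}^F[(X-t)_+^2]$.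 Then the optimal portfolio for the problem with $\mathcal{M}=\mathcal{M}(\bm{\mu},\bm{\Sigma})$ is \[ \bm{w}^*_\lambda=\arg\min_{\bm{w}\in\mathcal{W}^+} h_{\lambda,t}\big(\bm{w}^\top\bm{\mu},\sqrt{\bm{w}^\top\bm{\Sigma}\bm{w}}\big), \] and the optimal portfolio for the problem with $\mathcal{M}=\mathcal{M}_S(\bm{\mu},\bm{\Sigma})$ is \[ \bm{w}^*_{S,\lambda}=\arg\min_{\bm{w}\in\mathcal{W}^+} h_{S,\lambda,t}\big(\bm{w}^\top\bm{\mu},\sqrt{\bm{w}^\top\bm{\Sigma}\bm{w}}\big). \]
   Context: For $x\in\mathbb{R}$, $(x)_+=\max\{x,0\}$ and $(x)_-=\max\{-x,0\}$. For $a\in\mathbb{R}$, $s>0$: $\mathcal{L}_\lambda(a,s)$ is the set of probability distributions $F$ on $\mathbb{R}$ with $\mathbb{E}^F[X]=a$, $\mathbb{E}^F[X^2]=a^2+s^2$ and $\mathbb{E}^F[(X-t)_-]\le\lambda$; $\mathcal{L}_{S,\lambda}(a,s)$ is its subset of symmetric distributions. A distribution of a real random variable $X$ is symmetric if there is $b\in\mathbb{R}$ with $\mathbb{P}(X-b>x)=\mathbb{P}(X-b<-x)$ for all $x$. A distribution $G$ of $\bm{X}\in\mathbb{R}^d$ is symmetric if there is $\bm{a}\in\mathbb{R}^d$ with $\mathbb{P}(\bm{X}-\bm{a}\in B)=\mathbb{P}(\bm{X}-\bm{a}\in -B)$ for all Borel $B\subseteq\mathbb{R}^d$, where $-B=\{\bm{x}:-\bm{x}\in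 B\}$. *)

theory Defs
  imports "HOL-Probability.Probability"
begin

definition real_dist :: "real measure \<Rightarrow> bool" where
  "real_dist F \<longleftrightarrow> prob_space F \<and> sets F = sets borel \<and>
     integrable F (\<lambda>x. x) \<and> integrable F (\<lambda>x. x\<^sup>2)"

definition L_lam :: "real \<Rightarrow> real \<Rightarrow> real \<Rightarrow> real \<Rightarrow> real measure set" where
  "L_lam t lam a s = {F. real_dist F \<and>
      (\<integral>x. x \<partial>F) = a \<and> (\<integral>x. x\<^sup>2 \<partial>F) = a\<^sup>2 + s\<^sup>2 \<and>
      (\<integral>x. max (-(x - t)) 0 \<partial>F) \<le> lam}"

definition symmetric_real :: "real measure \<Rightarrow> bool" where
  "symmetric_real F \<longleftrightarrow> (\<exists>b. \<forall>x. measure F {y \<in> space F. y - b > x} = measure F {y \<in> space F. y - b < - x})"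

definition LS_lam :: "real \<Rightarrow> real \<Rightarrow> real \<Rightarrow> real \<Rightarrow> real measure set" where
  "LS_lam t lam a s = {F \<in> L_lam t lam a s. symmetric_real F}"

definition upper_sq :: "real \<Rightarrow> real measure \<Rightarrow> ennreal" where
  "upper_sq t F = (\<integral>\<^sup>+x. ennreal ((max (x - t) 0)\<^sup>2) \<partial>F)"

definition h_lam :: "real \<Rightarrow> real \<Rightarrow> real \<Rightarrow> real \<Rightarrow> ennreal" where
  "h_lam lam t a s = (SUP F \<in> L_lam t lam a s. upper_sq t F)"

definition hS_lam :: "real \<Rightarrow> real \<Rightarrow> real \<Rightarrow> real \<Rightarrow> ennreal" where
  "hS_lam lam t a s = (SUP F \<in> LS_lam t lam a s. upper_sq t F)"

definition pos_def :: "real^'n^'n \<Rightarrow> bool" where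
  "pos_def S \<longleftrightarrow> transpose S = S \<and> (\<forall>x. x \<noteq> 0 \<longrightarrow> x \<bullet> (S *v x) > 0)"

definition M_set :: "real^'n \<Rightarrow> real^'n^'n \<Rightarrow> (real^'n) measure set" where
  "M_set mu S = {G. prob_space G \<and> sets G = sets borel \<and>
      (\<forall>i. integrable G (\<lambda>x. x $ i)) \<and>
      (\<forall>i j. integrable G (\<lambda>x. x $ i * x $ j)) \<and>
      (\<forall>i. (\<integral>x. x $ i \<partial>G) = mu $ i) \<and>
      (\<forall>i j. (\<integral>x. (x $ i - mu $ i) * (x $ j - mu $ j) \<partial>G) = S $ i $ j)}"

definition symmetric_vec :: "(real^'n) measure \<Rightarrow> bool" where
  "symmetric_vec G \<longleftrightarrow> (\<exists>a. \<forall>B \<in> sets borel.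
      measure G {x \<in> space G. x - a \<in> B} = measure G {x \<in> space G. x - a \<in> {y. - y \<in> B}})"

definition MS_set :: "real^'n \<Rightarrow> real^'n^'n \<Rightarrow> (real^'n) measure set" where
  "MS_set mu S = {G \<in> M_set mu S. symmetric_vec G}"

definition W_plus :: "(real^'n) set" where
  "W_plus = {w. (\<Sum>i\<in>UNIV. w $ i) = 1 \<and> (\<forall>i. w $ i \<ge> 0)}"

definition M_w_lam :: "(real^'n) measure set \<Rightarrow> real \<Rightarrow> real \<Rightarrow> real^'n \<Rightarrow> (real^'n) measure set" where
  "M_w_lam M t lam w = {G \<in> M. (\<integral>x. max (-(w \<bullet> x - t)) 0 \<partial>G) \<le> lam}"

definition worst_obj :: "(real^'n) measure set \<Rightarrow> real \<Rightarrow> real \<Rightarrow> real^'n \<Rightarrow> ennreal" where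
  "worst_obj M t lam w = (SUP G \<in> M_w_lam M t lam w. \<integral>\<^sup>+x. ennreal ((max (w \<bullet> x - t) 0)\<^sup>2) \<partial>G)"

definition is_argmin_on :: "('a \<Rightarrow> 'b::linorder) \<Rightarrow> 'a set \<Rightarrow> 'a \<Rightarrow> bool" where
  "is_argmin_on f A x \<longleftrightarrow> x \<in> A \<and> (\<forall>y\<in>A. f x \<le> f y)"

end

theory Submission
  imports Defs
begin

definition qf :: "real^'n^'n \<Rightarrow> real^'n \<Rightarrow> real" where
  "qf R x = (\<Sum>i\<in>UNIV. \<Sum>j\<in>UNIV. x$i * R$i$j * x$j)"

definition bf :: "real^'n^'n \<Rightarrow> real^'n \<Rightarrow> real^'n \<Rightarrow> real" where
  "bf R x z = (\<Sum>i\<in>UNIV. \<Sum>j\<in>UNIV. x$i * R$i$j * z$j)"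

definition psd :: "real^'n^'n \<Rightarrow> bool" where
  "psd R \<longleftrightarrow> (\<forall>i j. R$i$j = R$j$i) \<and> (\<forall>x. 0 \<le> qf R x)"

lemma sum_axis_l: "(\<Sum>i\<in>UNIV. axis m (1::real) $ i * f i) = f m"
  by (simp add: axis_def if_distrib[of "\<lambda>x. x * _"] cong: if_cong)

lemma sum_axis_r: "(\<Sum>i\<in>UNIV. f i * axis m (1::real) $ i) = f m"
  by (simp add: axis_def if_distrib[of "\<lambda>x. _ * x"] cong: if_cong)

lemma qf_shift:
  assumes sym: "\<forall>i j. R$i$j = R$j$i"
  shows "qf R (x + a *\<^sub>R z) = qf R x + 2 * a * bf R x z + a^2 * qf R z"
proof -
  have bs: "bf R z x = bf R x z"
    unfolding bf_def by (subst sum.swap) (auto intro!: sum.cong simp: sym mult.commute mult.left_commute)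
  have "qf R (x + a *\<^sub>R z) = qf R x + a * bf R x z + a * bf R z x + a^2 * qf R z"
    unfolding qf_def bf_def
    by (simp add: algebra_simps power2_eq_square sum.distrib sum_distrib_left)
  then show ?thesis using bs by simp
qed

lemma psd_zero_diag:
  fixes R :: "real^'n^'n" and m j :: 'n
  assumes "psd R" "R$m$m = 0"
  shows "R$m$j = 0"
proof (rule ccontr)
  assume ne: "R$m$j \<noteq> 0"
  have sym: "\<forall>i j. R$i$j = R$j$i" using assms(1) psd_def by blast
  define z :: "real^'n" where "z = axis m 1"
  define y :: "real^'n" where "y = axis j 1"
  have bz: "bf R y z = R$m$j"
    unfolding bf_def y_def z_def using sym by (simp add: sum_axis_l sum_axis_r)
  have qz: "qf R z = 0" unfolding qf_def z_def using assms(2) by (simp add: sum_axis_l sum_axis_r)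
  define a where "a = - (qf R y + 1) / (2 * R$m$j)"
  have "0 \<le> qf R (y + a *\<^sub>R z)" using assms(1) psd_def by blast
  also have "\<dots> = qf R y + 2 * a * R$m$j" using qf_shift[OF sym] bz qz by simp
  also have "\<dots> = -1" using ne unfolding a_def by (simp add: field_simps)
  finally show False by simp
qed

lemma psd_decomp_aux:
  assumes "finite I"
  shows "\<forall>R::real^'n^'n. psd R \<and> (\<forall>i j. i \<notin> I \<or> j \<notin> I \<longrightarrow> R$i$j = 0) \<longrightarrow>
     (\<exists>c::'n \<Rightarrow> real^'n. \<forall>i j. R$i$j = (\<Sum>k\<in>I. c k $ i * c k $ j))"
  using assms
proof (induction I rule: finite_induct)
  case empty
  then show ?case by auto
next
  case (insert m I)
  show ?case
  proof (intro allI impI, elim conjE)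
    fix R :: "real^'n^'n"
    assume psdR: "psd R" and supp: "\<forall>i j. i \<notin> insert m I \<or> j \<notin> insert m I \<longrightarrow> R$i$j = 0"
    have sym: "\<forall>i j. R$i$j = R$j$i" using psdR psd_def by blast
    show "\<exists>c::'n \<Rightarrow> real^'n. \<forall>i j. R$i$j = (\<Sum>k\<in>insert m I. c k $ i * c k $ j)"
    proof (cases "R$m$m = 0")
      case True
      have z: "R$m$j = 0" for j using psd_zero_diag[OF psdR True] .
      have "\<forall>i j. i \<notin> I \<or> j \<notin> I \<longrightarrow> R$i$j = 0"
      proof (intro allI impI)
        fix i j assume "i \<notin> I \<or> j \<notin> I"
        then show "R$i$j = 0" using supp z[of i] z[of j] sym by (cases "i = m"; cases "j = m") auto
      qed
      then obtain c :: "'n \<Rightarrow> real^'n" where c: "\<forall>i j. R$i$j = (\<Sum>k\<in>I. c k $ i * c k $ j)"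
        using insert.IH psdR by blast
      show ?thesis
        by (rule exI[of _ "c(m := 0)"]) (use c insert.hyps in \<open>auto intro!: sum.cong\<close>)
    next
      case False
      have pos: "R$m$m > 0"
      proof -
        have "0 \<le> qf R (axis m 1)" using psdR psd_def by blast
        also have "qf R (axis m 1) = R$m$m" unfolding qf_def by (simp add: sum_axis_l sum_axis_r)
        finally show ?thesis using False by simp
      qed
      define v :: "real^'n" where "v = (\<chi> i. R$i$m / sqrt (R$m$m))"
      define R' :: "real^'n^'n" where "R' = (\<chi> i j. R$i$j - v$i * v$j)"
      have vv: "v$i * v$j = R$i$m * R$j$m / R$m$m" for i j
        unfolding v_def using pos by (simp add: field_simps)
      have symR': "\<forall>i j. R'$i$j = R'$j$i" unfolding R'_def using sym by simp
      have qfR': "qf R' x = qf R x - (bf R x (axis m 1))^2 / R$m$m" for x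
      proof -
        have b: "bf R x (axis m 1) = (\<Sum>i\<in>UNIV. x$i * R$i$m)"
          unfolding bf_def by (simp add: sum_axis_l sum_axis_r)
        have "qf R' x = qf R x - (\<Sum>i\<in>UNIV. \<Sum>j\<in>UNIV. x$i * (v$i * v$j) * x$j)"
          unfolding qf_def R'_def by (simp add: algebra_simps sum_subtractf)
        also have "(\<Sum>i\<in>UNIV. \<Sum>j\<in>UNIV. x$i * (v$i * v$j) * x$j) = (\<Sum>i\<in>UNIV. x$i * v$i)^2"
          by (simp add: power2_eq_square sum_product algebra_simps)
        also have "(\<Sum>i\<in>UNIV. x$i * v$i) = (\<Sum>i\<in>UNIV. x$i * R$i$m) / sqrt (R$m$m)"
          unfolding v_def by (simp add: sum_divide_distrib)
        finally show ?thesis using pos b by (simp add: power_divide)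
      qed
      have psdR': "psd R'"
        unfolding psd_def
      proof (intro conjI allI)
        show "R'$i$j = R'$j$i" for i j using symR' by blast
        fix x
        define a where "a = - bf R x (axis m 1) / R$m$m"
        have qa: "qf R (axis m 1) = R$m$m" unfolding qf_def by (simp add: sum_axis_l sum_axis_r)
        have "0 \<le> qf R (x + a *\<^sub>R axis m 1)" using psdR psd_def by blast
        also have "\<dots> = qf R x + 2 * a * bf R x (axis m 1) + a^2 * R$m$m"
          by (simp only: qf_shift[OF sym] qa)
        also have "\<dots> = qf R x - (bf R x (axis m 1))^2 / R$m$m"
          using pos unfolding a_def by (simp add: field_simps power2_eq_square)
        finally show "0 \<le> qf R' x" using qfR' by simp
      qed
      have suppR': "\<forall>i j. i \<notin> I \<or> j \<notin> I \<longrightarrow> R'$i$j = 0"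
      proof (intro allI impI)
        fix i j assume h: "i \<notin> I \<or> j \<notin> I"
        show "R'$i$j = 0"
        proof (cases "i = m \<or> j = m")
          case True
          have vm: "v$k * v$m = R$k$m" for k using vv[of k m] pos by simp
          from True show ?thesis unfolding R'_def using vm sym by (auto simp: mult.commute)
        next
          case False
          then have "i \<notin> insert m I \<or> j \<notin> insert m I" using h by auto
          then have "R$i$j = 0" "R$i$m = 0 \<or> R$j$m = 0" using supp by auto
          then show ?thesis unfolding R'_def using vv by auto
        qed
      qed
      obtain c :: "'n \<Rightarrow> real^'n" where c: "\<forall>i j. R'$i$j = (\<Sum>k\<in>I. c k $ i * c k $ j)"
        using insert.IH psdR' suppR' by blast
      show ?thesis
      proof (rule exI[of _ "c(m := v)"], intro allI)
        fix i j
        have "(\<Sum>k\<in>insert m I. (c(m := v)) k $ i * (c(m := v)) k $ j) = v$i * v$j + (\<Sum>k\<in>I. c k $ i * c k $ j)"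
          using insert.hyps by (auto intro!: sum.cong)
        also have "\<dots> = R$i$j" using c[rule_format, of i j] unfolding R'_def by simp
        finally show "R$i$j = (\<Sum>k\<in>insert m I. (c(m := v)) k $ i * (c(m := v)) k $ j)" by simp
      qed
    qed
  qed
qed

lemma psd_decomp:
  fixes R :: "real^'n^'n"
  assumes "psd R"
  shows "\<exists>c::'n \<Rightarrow> real^'n. \<forall>i j. R$i$j = (\<Sum>k\<in>UNIV. c k $ i * c k $ j)"
  using psd_decomp_aux[of "UNIV::'n set"] assms by auto

lemma qf_eq: "qf S x = x \<bullet> (S *v x)"
  unfolding qf_def inner_vec_def matrix_vector_mult_def
  by (simp add: sum_distrib_left mult.assoc)

lemma bf_eq: "bf S x z = x \<bullet> (S *v z)"
  unfolding bf_def inner_vec_def matrix_vector_mult_def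
  by (simp add: sum_distrib_left mult.assoc)

lemma pos_def_sym: "pos_def S \<Longrightarrow> S$i$j = S$j$i"
  unfolding pos_def_def by (metis transpose_def vec_lambda_beta)

lemma pos_def_psd: "pos_def S \<Longrightarrow> psd S"
  unfolding psd_def
proof (intro conjI allI)
  assume p: "pos_def S"
  show "S$i$j = S$j$i" for i j using pos_def_sym[OF p] .
  fix x :: "real^'a"
  show "0 \<le> qf S x"
  proof (cases "x = 0")
    case True then show ?thesis by (simp add: qf_def)
  next
    case False then show ?thesis using p unfolding pos_def_def qf_eq by (simp add: less_imp_le)
  qed
qed

lemma cov_decomp:
  fixes S :: "real^'n^'n" and w :: "real^'n"
  assumes p: "pos_def S" and w: "w \<noteq> 0"
  shows "\<exists>u c. w \<bullet> u = sqrt (w \<bullet> (S *v w)) \<and> (\<forall>k::'n. w \<bullet> c k = 0) \<and>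
           (\<forall>i j. S$i$j = u$i * u$j + (\<Sum>k\<in>UNIV. c k $ i * c k $ j))"
proof -
  have sym: "\<forall>i j. S$i$j = S$j$i" using pos_def_sym[OF p] by blast
  define q where "q = w \<bullet> (S *v w)"
  have qpos: "q > 0" using p w unfolding pos_def_def q_def by blast
  define s where "s = sqrt q"
  have spos: "s > 0" and ss: "s * s = q" using qpos unfolding s_def by (auto simp: real_sqrt_mult_self)
  define u where "u = (1 / s) *\<^sub>R (S *v w)"
  have xu: "x \<bullet> u = bf S x w / s" for x unfolding u_def bf_eq by (simp add: inner_scaleR_right)
  have "s * (w \<bullet> u) = s * s" using xu[of w] ss spos unfolding q_def bf_eq[symmetric]
    by (simp add: field_simps)
  then have wu: "w \<bullet> u = s" using spos by simp
  define R :: "real^'n^'n" where "R = (\<chi> i j. S$i$j - u$i * u$j)"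
  have qfR: "qf R x = qf S x - (x \<bullet> u)^2" for x
  proof -
    have "qf R x = qf S x - (\<Sum>i\<in>UNIV. \<Sum>j\<in>UNIV. x$i * (u$i * u$j) * x$j)"
      unfolding qf_def R_def by (simp add: algebra_simps sum_subtractf)
    also have "(\<Sum>i\<in>UNIV. \<Sum>j\<in>UNIV. x$i * (u$i * u$j) * x$j) = (x \<bullet> u)^2"
      unfolding inner_vec_def by (simp add: power2_eq_square sum_product algebra_simps)
    finally show ?thesis .
  qed
  have psdR: "psd R"
    unfolding psd_def
  proof (intro conjI allI)
    show "R$i$j = R$j$i" for i j unfolding R_def using sym by (simp add: mult.commute)
    fix x
    define a where "a = - bf S x w / q"
    have "0 \<le> qf S (x + a *\<^sub>R w)" using pos_def_psd[OF p] psd_def by blast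
    also have "\<dots> = qf S x + 2 * a * bf S x w + a^2 * q"
      using qf_shift[OF sym, of x a w] unfolding q_def qf_eq[of S w, symmetric] by simp
    also have "\<dots> = qf S x - (bf S x w)^2 / q"
      using qpos unfolding a_def by (simp add: field_simps power2_eq_square)
    also have "\<dots> = qf R x" using qfR xu ss spos by (simp add: power_divide power2_eq_square)
    finally show "0 \<le> qf R x" .
  qed
  obtain c :: "'n \<Rightarrow> real^'n" where c: "\<forall>i j. R$i$j = (\<Sum>k\<in>UNIV. c k $ i * c k $ j)"
    using psd_decomp[OF psdR] by blast
  have "(\<Sum>k\<in>UNIV. (w \<bullet> c k)^2) = qf R w"
    unfolding qf_def inner_vec_def using c
    by (simp add: power2_eq_square sum_product sum_distrib_left algebra_simps)
       (subst sum.swap, rule sum.cong, simp, subst sum.swap, simp)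
  also have "\<dots> = 0" using qfR[of w] wu ss unfolding qf_eq q_def by (simp add: power2_eq_square)
  finally have "\<forall>k\<in>UNIV. (w \<bullet> c k)^2 = 0" by (subst sum_nonneg_eq_0_iff[symmetric]) auto
  then have wc: "\<forall>k. w \<bullet> c k = 0" by simp
  have "\<forall>i j. S$i$j = u$i * u$j + (\<Sum>k\<in>UNIV. c k $ i * c k $ j)"
  proof (intro allI)
    fix i j show "S$i$j = u$i * u$j + (\<Sum>k\<in>UNIV. c k $ i * c k $ j)"
      using c[rule_format, of i j] unfolding R_def by simp
  qed
  then show ?thesis using wu wc unfolding s_def q_def by blast
qed


lemma pmf_prod_integral:
  fixes p :: "'k pmf" and F :: "real measure" and f :: "'k \<times> real \<Rightarrow> real"
  assumes fin: "finite (set_pmf p)" and F: "prob_space F"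
    and meas: "f \<in> borel_measurable (measure_pmf p \<Otimes>\<^sub>M F)"
    and int: "\<And>k. integrable F (\<lambda>y. f (k, y))"
  shows "integrable (measure_pmf p \<Otimes>\<^sub>M F) f"
    and "integral\<^sup>L (measure_pmf p \<Otimes>\<^sub>M F) f = (\<Sum>k\<in>set_pmf p. pmf p k * (\<integral>y. f (k, y) \<partial>F))"
proof -
  interpret F: prob_space F by fact
  interpret P: pair_prob_space "measure_pmf p" F by unfold_locales
  show i: "integrable (measure_pmf p \<Otimes>\<^sub>M F) f"
    by (rule P.Fubini_integrable[OF meas]) (auto intro: integrable_measure_pmf_finite[OF fin] int)
  have "integral\<^sup>L (measure_pmf p \<Otimes>\<^sub>M F) f = (\<integral>k. (\<integral>y. f (k, y) \<partial>F) \<partial>measure_pmf p)"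
    using P.integral_fst'[OF i] by simp
  also have "\<dots> = (\<Sum>k\<in>set_pmf p. (\<integral>y. f (k, y) \<partial>F) * pmf p k)"
    by (rule integral_measure_pmf_real[OF fin]) auto
  finally show "integral\<^sup>L (measure_pmf p \<Otimes>\<^sub>M F) f = (\<Sum>k\<in>set_pmf p. pmf p k * (\<integral>y. f (k, y) \<partial>F))"
    by (simp add: mult.commute)
qed

lemma F_poly:
  fixes F :: "real measure"
  assumes F: "real_dist F" "(\<integral>x. x \<partial>F) = a" "(\<integral>x. x\<^sup>2 \<partial>F) = a\<^sup>2 + s\<^sup>2" "s > 0"
  shows "integrable F (\<lambda>y. \<alpha> + \<beta> * ((y - a) / s) + \<gamma> * ((y - a) / s)\<^sup>2)"
    and "(\<integral>y. \<alpha> + \<beta> * ((y - a) / s) + \<gamma> * ((y - a) / s)\<^sup>2 \<partial>F) = \<alpha> + \<gamma>"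
proof -
  interpret prob_space F using F(1) real_dist_def by blast
  have i1: "integrable F (\<lambda>x. x)" and i2: "integrable F (\<lambda>x. x\<^sup>2)" using F(1) real_dist_def by auto
  define A where "A = \<alpha> - \<beta> * a / s + \<gamma> * a\<^sup>2 / s\<^sup>2"
  define B where "B = \<beta> / s - 2 * \<gamma> * a / s\<^sup>2"
  define C where "C = \<gamma> / s\<^sup>2"
  have eq: "(\<lambda>y. \<alpha> + \<beta> * ((y - a) / s) + \<gamma> * ((y - a) / s)\<^sup>2) = (\<lambda>y. A + B * y + C * y\<^sup>2)"
    using F(4) unfolding A_def B_def C_def by (auto simp: field_simps power2_eq_square)
  have ii: "integrable F (\<lambda>y. A + B * y + C * y\<^sup>2)"
    using i1 i2 by auto
  then show "integrable F (\<lambda>y. \<alpha> + \<beta> * ((y - a) / s) + \<gamma> * ((y - a) / s)\<^sup>2)" using eq by simp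
  have "(\<integral>y. A + B * y + C * y\<^sup>2 \<partial>F) = A + B * a + C * (a\<^sup>2 + s\<^sup>2)"
    using i1 i2 F(2,3) by (simp add: prob_space)
  also have "\<dots> = \<alpha> + \<gamma>" using F(4) unfolding A_def B_def C_def by (simp add: field_simps power2_eq_square)
  finally show "(\<integral>y. \<alpha> + \<beta> * ((y - a) / s) + \<gamma> * ((y - a) / s)\<^sup>2 \<partial>F) = \<alpha> + \<gamma>" using eq by simp
qed


locale constr =
  fixes F :: "real measure" and mu u w :: "real^'n" and c :: "'n \<Rightarrow> real^'n"
    and S :: "real^'n^'n" and a s :: real
  assumes F: "real_dist F" and Fm: "(\<integral>x. x \<partial>F) = a" and Fm2: "(\<integral>x. x\<^sup>2 \<partial>F) = a\<^sup>2 + s\<^sup>2"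
    and spos: "s > 0"
    and wu: "w \<bullet> u = s" and wc: "\<forall>k. w \<bullet> c k = 0" and wmu: "w \<bullet> mu = a"
    and S: "\<forall>i j. S$i$j = u$i * u$j + (\<Sum>k\<in>UNIV. c k $ i * c k $ j)"
begin

definition "pp = pmf_of_set (UNIV :: ('n \<times> bool) set)"
abbreviation "P \<equiv> measure_pmf pp"
definition V :: "'n \<times> bool \<Rightarrow> real^'n" where
  "V kb = ((if snd kb then 1 else -1) * sqrt (real CARD('n))) *\<^sub>R c (fst kb)"
definition Z :: "real \<Rightarrow> real" where "Z y = (y - a) / s"
definition Phi :: "('n \<times> bool) \<times> real \<Rightarrow> real^'n" where
  "Phi z = mu + Z (snd z) *\<^sub>R u + V (fst z)"
definition G where "G = distr (P \<Otimes>\<^sub>M F) borel Phi"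

lemma probF: "prob_space F" using F real_dist_def by blast

lemma setsF: "sets F = sets borel" using F real_dist_def by blast

lemma Z_meas: "Z \<in> borel_measurable borel"
  unfolding Z_def by (intro borel_measurable_divide borel_measurable_diff measurable_ident_sets measurable_const) auto

lemma fst_meas: "(\<lambda>z. g (fst z)) \<in> measurable (P \<Otimes>\<^sub>M F) N" if "\<And>x. g x \<in> space N"
  by (rule measurable_compose[OF measurable_fst]) (use that in \<open>auto simp: measurable_pmf_measure1\<close>)

lemma snd_meas: "(\<lambda>z. g (snd z)) \<in> borel_measurable (P \<Otimes>\<^sub>M F)" if "g \<in> borel_measurable borel" for g :: "real \<Rightarrow> real"
proof (rule measurable_compose[OF measurable_snd])
  have "measurable F (borel::real measure) = measurable borel borel" by (rule measurable_cong_sets[OF setsF refl])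
  then show "g \<in> borel_measurable F" using that by simp
qed

lemma Phi_meas: "Phi \<in> borel_measurable (P \<Otimes>\<^sub>M F)"
proof -
  have "(\<lambda>z. Z (snd z) *\<^sub>R u) \<in> borel_measurable (P \<Otimes>\<^sub>M F)"
    using snd_meas[OF Z_meas] by (intro borel_measurable_scaleR) auto
  moreover have "(\<lambda>z. V (fst z)) \<in> borel_measurable (P \<Otimes>\<^sub>M F)"
    by (rule fst_meas) simp
  ultimately show ?thesis unfolding Phi_def by (intro borel_measurable_add) auto
qed

lemma wPhi: "w \<bullet> Phi z = snd z"
  unfolding Phi_def V_def Z_def using wu wc wmu spos by (simp add: inner_add_right)

lemma Phi_comp: "Phi z $ i = mu$i + V (fst z) $ i + u$i * Z (snd z)"
  unfolding Phi_def by simp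

lemma fin_pp: "finite (set_pmf pp)" unfolding pp_def by simp

lemma set_pp: "set_pmf pp = UNIV" unfolding pp_def by simp

lemma pmf_pp: "pmf pp kb = 1 / (2 * real CARD('n))"
  unfolding pp_def by (simp add: card_UNIV_bool)

lemma sum_kb: fixes f :: "'n \<times> bool \<Rightarrow> real" shows "(\<Sum>kb\<in>UNIV. f kb) = (\<Sum>k\<in>UNIV. f (k, True) + f (k, False))"
proof -
  have "(\<Sum>kb\<in>UNIV. f kb) = (\<Sum>kb\<in>(UNIV::'n set) \<times> (UNIV::bool set). f kb)"
    by (simp add: UNIV_Times_UNIV)
  also have "\<dots> = (\<Sum>k\<in>UNIV. \<Sum>b\<in>UNIV. f (k, b))"
    by (simp add: sum.cartesian_product)
  also have "\<dots> = (\<Sum>k\<in>UNIV. f (k, True) + f (k, False))"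
    by (simp add: UNIV_bool add.commute)
  finally show ?thesis .
qed

lemma G_poly:
  fixes \<alpha> \<beta> \<gamma> :: "'n \<times> bool \<Rightarrow> real"
  defines "h \<equiv> (\<lambda>z. \<alpha> (fst z) + \<beta> (fst z) * Z (snd z) + \<gamma> (fst z) * (Z (snd z))\<^sup>2)"
  shows "integrable (P \<Otimes>\<^sub>M F) h"
    and "integral\<^sup>L (P \<Otimes>\<^sub>M F) h = (\<Sum>kb\<in>UNIV. (\<alpha> kb + \<gamma> kb)) / (2 * real CARD('n))"
proof -
  have meas: "h \<in> borel_measurable (P \<Otimes>\<^sub>M F)"
  proof -
    have m1: "(\<lambda>z. f (fst z)) \<in> borel_measurable (P \<Otimes>\<^sub>M F)" for f :: "'n \<times> bool \<Rightarrow> real"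
      by (rule fst_meas) simp
    have m2: "(\<lambda>z. Z (snd z)) \<in> borel_measurable (P \<Otimes>\<^sub>M F)" by (rule snd_meas[OF Z_meas])
    show ?thesis unfolding h_def
      by (intro borel_measurable_add borel_measurable_times borel_measurable_power m1 m2)
  qed
  have int: "integrable F (\<lambda>y. h (k, y))" for k
    unfolding h_def Z_def using F_poly(1)[OF F Fm Fm2 spos] by simp
  show "integrable (P \<Otimes>\<^sub>M F) h" by (rule pmf_prod_integral(1)[OF fin_pp probF meas int])
  have "integral\<^sup>L (P \<Otimes>\<^sub>M F) h = (\<Sum>k\<in>set_pmf pp. pmf pp k * (\<integral>y. h (k, y) \<partial>F))"
    by (rule pmf_prod_integral(2)[OF fin_pp probF meas int])
  also have "\<dots> = (\<Sum>k\<in>UNIV. (\<alpha> k + \<gamma> k) / (2 * real CARD('n)))"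
  proof -
    have e: "(\<integral>y. h (k, y) \<partial>F) = \<alpha> k + \<gamma> k" for k
      unfolding h_def Z_def using F_poly(2)[OF F Fm Fm2 spos] by simp
    show ?thesis unfolding set_pp pmf_pp e by (intro sum.cong refl) simp
  qed
  finally show "integral\<^sup>L (P \<Otimes>\<^sub>M F) h = (\<Sum>kb\<in>UNIV. (\<alpha> kb + \<gamma> kb)) / (2 * real CARD('n))"
    by (simp only: sum_divide_distrib)
qed

end

lemma cont_meas: "continuous_on UNIV f \<Longrightarrow> f \<in> borel_measurable borel"
  by (rule borel_measurable_continuous_onI)

lemma vnth_meas: "(\<lambda>x::real^'n. x $ i) \<in> borel_measurable borel"
  by (intro cont_meas continuous_intros)

context constr
begin

lemma r2: "sqrt (real CARD('n)) * sqrt (real CARD('n)) = real CARD('n)"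
  by simp

lemma EV: "(\<Sum>kb\<in>UNIV. V kb $ i) = 0"
  unfolding sum_kb V_def by simp

lemma EVV: "(\<Sum>kb\<in>UNIV. V kb $ i * V kb $ j) = 2 * real CARD('n) * (\<Sum>k\<in>UNIV. c k $ i * c k $ j)"
  unfolding sum_kb V_def by (simp add: sum_distrib_left algebra_simps)

lemma card_pos: "real CARD('n) > 0" by simp

lemma sum_const_kb: "(\<Sum>kb\<in>(UNIV::('n \<times> bool) set). x) = 2 * real CARD('n) * x"
  unfolding sum_kb by simp

lemma probPF: "prob_space (P \<Otimes>\<^sub>M F)"
proof -
  interpret F: prob_space F by (rule probF)
  interpret PF: pair_prob_space P F by unfold_locales
  show ?thesis by (rule PF.prob_space_axioms)
qed

lemma probG: "prob_space G"
  unfolding G_def by (rule prob_space.prob_space_distr[OF probPF Phi_meas])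

lemma setsG: "sets G = sets borel" unfolding G_def by simp

lemma intG:
  fixes f :: "real^'n \<Rightarrow> real"
  assumes "f \<in> borel_measurable borel"
  shows "integrable G f \<longleftrightarrow> integrable (P \<Otimes>\<^sub>M F) (\<lambda>z. f (Phi z))"
    and "integral\<^sup>L G f = integral\<^sup>L (P \<Otimes>\<^sub>M F) (\<lambda>z. f (Phi z))"
  unfolding G_def
  by (rule integrable_distr_eq[OF Phi_meas assms], rule integral_distr[OF Phi_meas assms])

lemma G_in_M: "G \<in> M_set mu S"
  unfolding M_set_def
proof (intro CollectI conjI allI)
  show "prob_space G" by (rule probG)
  show "sets G = sets borel" by (rule setsG)
  fix i j
  have e1: "(\<lambda>z. Phi z $ i) = (\<lambda>z. (\<lambda>kb. mu$i + V kb $ i) (fst z) + (\<lambda>kb. u$i) (fst z) * Z (snd z)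
        + (\<lambda>kb. 0) (fst z) * (Z (snd z))\<^sup>2)"
    by (simp add: Phi_comp algebra_simps)
  show "integrable G (\<lambda>x. x $ i)"
    unfolding intG(1)[OF vnth_meas] e1 by (rule G_poly(1))
  have "integral\<^sup>L G (\<lambda>x. x $ i) = (\<Sum>kb\<in>UNIV. (mu$i + V kb $ i) + 0) / (2 * real CARD('n))"
    unfolding intG(2)[OF vnth_meas] e1 by (rule G_poly(2))
  also have "\<dots> = mu $ i"
    using card_pos by (simp add: sum.distrib EV sum_const_kb)
  finally show "(\<integral>x. x $ i \<partial>G) = mu $ i" .
  have m2: "(\<lambda>x::real^'n. x $ i * x $ j) \<in> borel_measurable borel"
    by (intro cont_meas continuous_intros)
  have e2: "(\<lambda>z. Phi z $ i * Phi z $ j) = (\<lambda>z. (\<lambda>kb. (mu$i + V kb $ i) * (mu$j + V kb $ j)) (fst z)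
        + (\<lambda>kb. (mu$i + V kb $ i) * u$j + (mu$j + V kb $ j) * u$i) (fst z) * Z (snd z)
        + (\<lambda>kb. u$i * u$j) (fst z) * (Z (snd z))\<^sup>2)"
    by (simp add: Phi_comp algebra_simps power2_eq_square)
  show "integrable G (\<lambda>x. x $ i * x $ j)"
    unfolding intG(1)[OF m2] e2 by (rule G_poly(1))
  have m3: "(\<lambda>x::real^'n. (x $ i - mu $ i) * (x $ j - mu $ j)) \<in> borel_measurable borel"
    by (intro cont_meas continuous_intros)
  have e3: "(\<lambda>z. (Phi z $ i - mu $ i) * (Phi z $ j - mu $ j)) = (\<lambda>z. (\<lambda>kb. V kb $ i * V kb $ j) (fst z)
        + (\<lambda>kb. V kb $ i * u$j + V kb $ j * u$i) (fst z) * Z (snd z)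
        + (\<lambda>kb. u$i * u$j) (fst z) * (Z (snd z))\<^sup>2)"
    by (simp add: Phi_comp algebra_simps power2_eq_square)
  have "(\<integral>x. (x $ i - mu $ i) * (x $ j - mu $ j) \<partial>G) = (\<Sum>kb\<in>UNIV. V kb $ i * V kb $ j + u$i * u$j) / (2 * real CARD('n))"
    unfolding intG(2)[OF m3] e3 by (rule G_poly(2))
  also have "\<dots> = S $ i $ j"
    using card_pos S by (simp add: sum.distrib EVV sum_const_kb field_simps)
  finally show "(\<integral>x. (x $ i - mu $ i) * (x $ j - mu $ j) \<partial>G) = S $ i $ j" .
qed

end

context constr
begin

lemma G_nn:
  fixes g :: "real \<Rightarrow> ennreal"
  assumes g: "g \<in> borel_measurable borel"
  shows "(\<integral>\<^sup>+x. g (w \<bullet> x) \<partial>G) = (\<integral>\<^sup>+y. g y \<partial>F)"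
proof -
  interpret F: prob_space F by (rule probF)
  interpret PF: pair_prob_space P F by unfold_locales
  have mw: "(\<lambda>x::real^'n. g (w \<bullet> x)) \<in> borel_measurable borel"
    by (rule measurable_compose[OF _ g]) (intro cont_meas continuous_intros)
  have mgs: "(\<lambda>z. g (snd z)) \<in> borel_measurable (P \<Otimes>\<^sub>M F)"
  proof (rule measurable_compose[OF measurable_snd])
    have "measurable F (borel::ennreal measure) = measurable borel borel" by (rule measurable_cong_sets[OF setsF refl])
    then show "g \<in> borel_measurable F" using g by simp
  qed
  have "(\<integral>\<^sup>+x. g (w \<bullet> x) \<partial>G) = (\<integral>\<^sup>+z. g (w \<bullet> Phi z) \<partial>(P \<Otimes>\<^sub>M F))"
    unfolding G_def by (rule nn_integral_distr[OF Phi_meas]) (use mw in simp)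
  also have "\<dots> = (\<integral>\<^sup>+z. g (snd z) \<partial>(P \<Otimes>\<^sub>M F))" by (simp add: wPhi)
  also have "\<dots> = (\<integral>\<^sup>+k. (\<integral>\<^sup>+y. g y \<partial>F) \<partial>P)"
    using F.nn_integral_fst[OF mgs] by simp
  also have "\<dots> = (\<integral>\<^sup>+y. g y \<partial>F)" by simp
  finally show ?thesis .
qed

lemma G_int:
  fixes g :: "real \<Rightarrow> real"
  assumes g: "g \<in> borel_measurable borel" and ig: "integrable F g"
  shows "(\<integral>x. g (w \<bullet> x) \<partial>G) = (\<integral>y. g y \<partial>F)"
proof -
  have mw: "(\<lambda>x::real^'n. g (w \<bullet> x)) \<in> borel_measurable borel"
    by (rule measurable_compose[OF _ g]) (intro cont_meas continuous_intros)
  have "(\<integral>x. g (w \<bullet> x) \<partial>G) = integral\<^sup>L (P \<Otimes>\<^sub>M F) (\<lambda>z. g (snd z))"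
    unfolding intG(2)[OF mw] wPhi ..
  also have "\<dots> = (\<Sum>k\<in>set_pmf pp. pmf pp k * (\<integral>y. g (snd (k, y)) \<partial>F))"
    by (rule pmf_prod_integral(2)[OF fin_pp probF snd_meas[OF g]]) (simp add: ig)
  also have "\<dots> = (\<Sum>k\<in>set_pmf pp. pmf pp k) * (\<integral>y. g y \<partial>F)"
    by (simp add: sum_distrib_right)
  also have "(\<Sum>k\<in>set_pmf pp. pmf pp k) = 1"
    by (rule sum_pmf_eq_1[OF fin_pp]) simp
  finally show ?thesis by simp
qed

end

lemma refl_distr:
  fixes F :: "real measure"
  assumes F: "real_dist F" and sym: "symmetric_real F"
  shows "\<exists>b. distr F borel (\<lambda>y. 2 * b - y) = F \<and> b = (\<integral>x. x \<partial>F)"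
proof -
  interpret real_distribution F using F unfolding real_dist_def
    by (intro real_distribution.intro real_distribution_axioms.intro) auto
  obtain b where hb: "\<forall>x. measure F {y \<in> space F. y - b > x} = measure F {y \<in> space F. y - b < - x}"
    using sym unfolding symmetric_real_def by blast
  have hb': "measure F {b + x<..} = measure F {..< b - x}" for x
  proof -
    have "{y \<in> space F. y - b > x} = {b + x<..}" "{y \<in> space F. y - b < - x} = {..< b - x}" by auto
    then show ?thesis using hb by metis
  qed
  have rm: "(\<lambda>y. 2 * b - y) \<in> borel_measurable F" by simp
  interpret D: real_distribution "distr F borel (\<lambda>y. 2 * b - y)"
    by (intro real_distribution.intro real_distribution_axioms.intro prob_space_distr rm) auto
  have cdfeq: "cdf (distr F borel (\<lambda>y. 2 * b - y)) x = cdf F x" for x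
  proof -
    have "cdf (distr F borel (\<lambda>y. 2 * b - y)) x = measure F ((\<lambda>y. 2 * b - y) -` {..x} \<inter> space F)"
      unfolding cdf_def2 by (rule measure_distr[OF rm]) simp
    also have "(\<lambda>y. 2 * b - y) -` {..x} \<inter> space F = space F - {..< 2 * b - x}" by auto
    also have "measure F (space F - {..< 2 * b - x}) = 1 - measure F {..< 2 * b - x}"
      by (rule prob_compl) simp
    also have "measure F {..< 2 * b - x} = measure F {x <..}"
      using hb'[of "x - b"] by simp
    also have "1 - measure F {x <..} = measure F (space F - {x <..})"
      by (rule prob_compl[symmetric]) simp
    also have "space F - {x <..} = {..x}" by auto
    finally show ?thesis unfolding cdf_def2 .
  qed
  have deq: "distr F borel (\<lambda>y. 2 * b - y) = F"
    by (rule cdf_unique) (unfold_locales, auto simp: cdfeq)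
  have i1: "integrable F (\<lambda>x. x)" using F real_dist_def by blast
  have "(\<integral>x. x \<partial>F) = (\<integral>x. x \<partial>(distr F borel (\<lambda>y. 2 * b - y)))" using deq by simp
  also have "\<dots> = (\<integral>x. 2 * b - x \<partial>F)" by (rule integral_distr[OF rm]) simp
  also have "\<dots> = 2 * b - (\<integral>x. x \<partial>F)" using i1 prob_space by simp
  finally have "b = (\<integral>x. x \<partial>F)" by simp
  with deq show ?thesis by blast
qed


context constr
begin

lemma G_sym:
  assumes symF: "symmetric_real F"
  shows "symmetric_vec G"
  unfolding symmetric_vec_def
proof (intro exI ballI)
  fix B :: "(real^'n) set" assume B: "B \<in> sets borel"
  obtain b where db: "distr F borel (\<lambda>y. 2 * b - y) = F" and bm: "b = (\<integral>x. x \<partial>F)"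
    using refl_distr[OF F symF] by blast
  have ba: "b = a" using bm Fm by simp
  define fl :: "'n \<times> bool \<Rightarrow> 'n \<times> bool" where "fl kb = (fst kb, \<not> snd kb)" for kb
  define sg where "sg z = (fl (fst z), 2 * a - snd z)" for z :: "('n \<times> bool) \<times> real"
  have Phisg: "Phi (sg z) = 2 *\<^sub>R mu - Phi z" for z
    unfolding Phi_def sg_def fl_def V_def Z_def
    by (simp add: algebra_simps diff_divide_distrib) (simp add: scaleR_2 field_simps)
  have rm: "(\<lambda>y. 2 * a - y) \<in> borel_measurable F" by (simp add: measurable_cong_sets[OF setsF refl])
  have flm: "fl \<in> measurable P (count_space UNIV)" by simp
  have dP: "distr P (count_space UNIV) fl = P"
  proof -
    have "inj fl" unfolding fl_def inj_def by auto
    moreover have "fl ` UNIV = UNIV" unfolding fl_def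
      by (auto simp: image_iff)
    ultimately have "map_pmf fl pp = pp" unfolding pp_def by (simp add: map_pmf_of_set_inj)
    then show ?thesis by (metis map_pmf_rep_eq)
  qed
  have dF: "distr F borel (\<lambda>y. 2 * a - y) = F" using db ba by simp
  interpret F: prob_space F by (rule probF)
  have dPF: "distr (P \<Otimes>\<^sub>M F) (count_space UNIV \<Otimes>\<^sub>M borel) sg = P \<Otimes>\<^sub>M F"
  proof -
    have "distr P (count_space UNIV) fl \<Otimes>\<^sub>M distr F borel (\<lambda>y. 2 * a - y)
        = distr (P \<Otimes>\<^sub>M F) (count_space UNIV \<Otimes>\<^sub>M borel) (\<lambda>(x, y). (fl x, 2 * a - y))"
      by (rule pair_measure_distr[OF flm rm]) (simp add: dF F.sigma_finite_measure_axioms)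
    moreover have "(\<lambda>(x, y). (fl x, 2 * a - y)) = sg" unfolding sg_def by auto
    ultimately show ?thesis using dP dF by simp
  qed
  have sgm: "sg \<in> measurable (P \<Otimes>\<^sub>M F) (count_space UNIV \<Otimes>\<^sub>M borel)"
    unfolding sg_def
    by (intro measurable_Pair measurable_compose[OF measurable_fst flm]
        measurable_compose[OF measurable_snd rm])
  have spG: "space G = UNIV" unfolding G_def by simp
  have spPF: "space (P \<Otimes>\<^sub>M F) = UNIV"
    by (simp add: space_pair_measure sets_eq_imp_space_eq[OF setsF])
  have setsPF: "sets (P \<Otimes>\<^sub>M F) = sets (count_space UNIV \<Otimes>\<^sub>M borel)"
    by (intro sets_pair_measure_cong) (simp_all add: setsF)
  have shm: "(\<lambda>x. x - mu) \<in> borel_measurable (borel :: (real^'n) measure)"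
    by (intro cont_meas continuous_intros)
  have nm: "(\<lambda>x. - x) \<in> borel_measurable (borel :: (real^'n) measure)"
    by (intro cont_meas continuous_intros)
  define B1 where "B1 = {x. x - mu \<in> B}"
  define B2 where "B2 = {x. x - mu \<in> {y. - y \<in> B}}"
  have B1s: "B1 \<in> sets borel"
    using measurable_sets[OF shm B] unfolding B1_def by (simp add: vimage_def)
  have B2s: "B2 \<in> sets borel"
  proof -
    have "(\<lambda>x. - (x - mu)) \<in> borel_measurable (borel :: (real^'n) measure)"
      by (intro cont_meas continuous_intros)
    from measurable_sets[OF this B] show ?thesis unfolding B2_def by (simp add: vimage_def)
  qed
  define A where "A = Phi -` B1 \<inter> space (P \<Otimes>\<^sub>M F)"
  have As: "A \<in> sets (count_space UNIV \<Otimes>\<^sub>M borel)"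
    unfolding A_def setsPF[symmetric] by (rule measurable_sets[OF Phi_meas B1s])
  have "measure G {x \<in> space G. x - mu \<in> B} = measure G B1" unfolding B1_def spG by simp
  also have "\<dots> = measure (P \<Otimes>\<^sub>M F) A"
    unfolding G_def A_def by (rule measure_distr[OF Phi_meas B1s])
  also have "\<dots> = measure (distr (P \<Otimes>\<^sub>M F) (count_space UNIV \<Otimes>\<^sub>M borel) sg) A"
    using dPF by simp
  also have "\<dots> = measure (P \<Otimes>\<^sub>M F) (sg -` A \<inter> space (P \<Otimes>\<^sub>M F))"
    by (rule measure_distr[OF sgm As])
  also have "sg -` A \<inter> space (P \<Otimes>\<^sub>M F) = Phi -` B2 \<inter> space (P \<Otimes>\<^sub>M F)"
  proof -
    have Phisg': "Phi (sg z) - mu = -(Phi z - mu)" for z using Phisg[of z] by (simp add: scaleR_2 algebra_simps)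
    show ?thesis unfolding A_def B1_def B2_def spPF vimage_def by (simp only: Phisg' mem_Collect_eq Int_UNIV_right)
  qed
  also have "measure (P \<Otimes>\<^sub>M F) (Phi -` B2 \<inter> space (P \<Otimes>\<^sub>M F)) = measure G B2"
    unfolding G_def by (rule measure_distr[OF Phi_meas B2s, symmetric])
  also have "\<dots> = measure G {x \<in> space G. x - mu \<in> {y. - y \<in> B}}" unfolding B2_def spG by simp
  finally show "measure G {x \<in> space G. x - mu \<in> B} = measure G {x \<in> space G. x - mu \<in> {y. - y \<in> B}}" .
qed

end

lemma push:
  fixes G :: "(real^'n) measure" and mu w :: "real^'n" and S :: "real^'n^'n"
  assumes G: "G \<in> M_set mu S" and q: "w \<bullet> (S *v w) \<ge> 0"
    and lamc: "(\<integral>x. max (-(w \<bullet> x - t)) 0 \<partial>G) \<le> lam"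
  shows "distr G borel (\<lambda>x. w \<bullet> x) \<in> L_lam t lam (w \<bullet> mu) (sqrt (w \<bullet> (S *v w)))"
    and "upper_sq t (distr G borel (\<lambda>x. w \<bullet> x)) = (\<integral>\<^sup>+x. ennreal ((max (w \<bullet> x - t) 0)\<^sup>2) \<partial>G)"
proof -
  have pG: "prob_space G" and sG: "sets G = sets borel"
    and i1: "\<And>i. integrable G (\<lambda>x. x $ i)" and i2: "\<And>i j. integrable G (\<lambda>x. x $ i * x $ j)"
    and m1: "\<And>i. (\<integral>x. x $ i \<partial>G) = mu $ i"
    and cv: "\<And>i j. (\<integral>x. (x $ i - mu $ i) * (x $ j - mu $ j) \<partial>G) = S $ i $ j"
    using G unfolding M_set_def by auto
  interpret prob_space G by (rule pG)
  have mc: "measurable G (borel::real measure) = measurable borel borel"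
    by (rule measurable_cong_sets[OF sG refl])
  have wm: "(\<lambda>x. w \<bullet> x) \<in> borel_measurable G"
    unfolding mc by (intro cont_meas continuous_intros)
  define F where "F = distr G borel (\<lambda>x. w \<bullet> x)"
  have winner: "w \<bullet> x = (\<Sum>i\<in>UNIV. w $ i * x $ i)" for x :: "real^'n"
    by (simp add: inner_vec_def)
  have wsq: "(w \<bullet> x)\<^sup>2 = (\<Sum>i\<in>UNIV. \<Sum>j\<in>UNIV. (w $ i * w $ j) * (x $ i * x $ j))" for x :: "real^'n"
    unfolding winner by (simp add: power2_eq_square sum_product algebra_simps)
  have iw: "integrable G (\<lambda>x. w \<bullet> x)" unfolding winner using i1 by auto
  have iw2: "integrable G (\<lambda>x. (w \<bullet> x)\<^sup>2)" unfolding wsq using i2 by auto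
  have ew: "(\<integral>x. w \<bullet> x \<partial>G) = w \<bullet> mu"
    unfolding winner using i1 m1 by (simp add: integral_sum)
  have exx: "(\<integral>x. x $ i * x $ j \<partial>G) = S $ i $ j + mu $ i * mu $ j" for i j
  proof -
    have "(\<integral>x. (x $ i - mu $ i) * (x $ j - mu $ j) \<partial>G)
        = (\<integral>x. x $ i * x $ j - mu $ j * x $ i - mu $ i * x $ j + mu $ i * mu $ j \<partial>G)"
      by (rule Bochner_Integration.integral_cong) (auto simp: algebra_simps)
    also have "\<dots> = (\<integral>x. x $ i * x $ j \<partial>G) - mu $ j * mu $ i - mu $ i * mu $ j + mu $ i * mu $ j"
      using i1 i2 m1 by (simp add: prob_space)
    finally show ?thesis using cv[of i j] by (simp add: algebra_simps)
  qed
  have ew2: "(\<integral>x. (w \<bullet> x)\<^sup>2 \<partial>G) = (w \<bullet> mu)\<^sup>2 + w \<bullet> (S *v w)"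
  proof -
    have "(\<integral>x. (w \<bullet> x)\<^sup>2 \<partial>G) = (\<Sum>i\<in>UNIV. \<Sum>j\<in>UNIV. (w $ i * w $ j) * (S $ i $ j + mu $ i * mu $ j))"
      unfolding wsq using i2 exx by (simp add: integral_sum)
    also have "\<dots> = (\<Sum>i\<in>UNIV. \<Sum>j\<in>UNIV. w $ i * S $ i $ j * w $ j) + (\<Sum>i\<in>UNIV. \<Sum>j\<in>UNIV. (w $ i * mu $ i) * (w $ j * mu $ j))"
      by (simp add: algebra_simps sum.distrib)
    also have "(\<Sum>i\<in>UNIV. \<Sum>j\<in>UNIV. w $ i * S $ i $ j * w $ j) = w \<bullet> (S *v w)"
      using qf_eq[of S w] unfolding qf_def .
    also have "(\<Sum>i\<in>UNIV. \<Sum>j\<in>UNIV. (w $ i * mu $ i) * (w $ j * mu $ j)) = (w \<bullet> mu)\<^sup>2"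
      unfolding winner by (simp add: power2_eq_square sum_product)
    finally show ?thesis by simp
  qed
  have idm: "(\<lambda>x::real. x) \<in> borel_measurable borel" by simp
  have sqm: "(\<lambda>x::real. x\<^sup>2) \<in> borel_measurable borel" by simp
  have rd: "real_dist F"
    unfolding real_dist_def F_def
    by (auto intro!: prob_space_distr wm simp: integrable_distr_eq[OF wm idm] integrable_distr_eq[OF wm sqm] iw iw2)
  have e1: "(\<integral>x. x \<partial>F) = w \<bullet> mu" unfolding F_def integral_distr[OF wm idm] ew ..
  have e2: "(\<integral>x. x\<^sup>2 \<partial>F) = (w \<bullet> mu)\<^sup>2 + (sqrt (w \<bullet> (S *v w)))\<^sup>2"
    unfolding F_def integral_distr[OF wm sqm] ew2 using q by simp
  have mx: "(\<lambda>x::real. max (-(x - t)) 0) \<in> borel_measurable borel" by (intro cont_meas continuous_intros)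
  have e3: "(\<integral>x. max (-(x - t)) 0 \<partial>F) \<le> lam"
    unfolding F_def integral_distr[OF wm mx] using lamc .
  show "distr G borel (\<lambda>x. w \<bullet> x) \<in> L_lam t lam (w \<bullet> mu) (sqrt (w \<bullet> (S *v w)))"
    using rd e1 e2 e3 unfolding L_lam_def F_def by simp
  have pm: "(\<lambda>x::real. ennreal ((max (x - t) 0)\<^sup>2)) \<in> borel_measurable borel"
    by (intro measurable_compose[OF _ measurable_ennreal] cont_meas continuous_intros)
  show "upper_sq t (distr G borel (\<lambda>x. w \<bullet> x)) = (\<integral>\<^sup>+x. ennreal ((max (w \<bullet> x - t) 0)\<^sup>2) \<partial>G)"
    unfolding upper_sq_def by (rule nn_integral_distr[OF wm]) (use pm in simp)
qed

lemma push_sym: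
  fixes G :: "(real^'n) measure" and w :: "real^'n"
  assumes sG: "sets G = sets borel" and sym: "symmetric_vec G"
  shows "symmetric_real (distr G borel (\<lambda>x. w \<bullet> x))"
proof -
  obtain a0 where ha: "\<forall>B \<in> sets borel. measure G {x \<in> space G. x - a0 \<in> B} = measure G {x \<in> space G. x - a0 \<in> {y. - y \<in> B}}"
    using sym unfolding symmetric_vec_def by blast
  have mc: "measurable G (borel::real measure) = measurable borel borel"
    by (rule measurable_cong_sets[OF sG refl])
  have wm: "(\<lambda>x. w \<bullet> x) \<in> borel_measurable G"
    unfolding mc by (intro cont_meas continuous_intros)
  have spG: "space G = UNIV" using sets_eq_imp_space_eq[OF sG] by simp
  show ?thesis unfolding symmetric_real_def
  proof (intro exI allI)
    fix x :: real
    define b where "b = w \<bullet> a0"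
    have wcm: "(\<lambda>v::real^'n. w \<bullet> v) \<in> borel_measurable borel" by (intro cont_meas continuous_intros)
    define Bx where "Bx = {v::real^'n. w \<bullet> v > x}"
    have Bs: "Bx \<in> sets borel"
      using measurable_sets[OF wcm, of "{x<..}"] unfolding Bx_def by (simp add: vimage_def)
    have s1: "{y \<in> space (distr G borel (\<lambda>x. w \<bullet> x)). y - b > x} \<in> sets borel" by simp
    have s2: "{y \<in> space (distr G borel (\<lambda>x. w \<bullet> x)). y - b < - x} \<in> sets borel" by simp
    have "measure (distr G borel (\<lambda>x. w \<bullet> x)) {y \<in> space (distr G borel (\<lambda>x. w \<bullet> x)). y - b > x}
        = measure G ((\<lambda>x. w \<bullet> x) -` {y \<in> space (distr G borel (\<lambda>x. w \<bullet> x)). y - b > x} \<inter> space G)"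
      by (rule measure_distr[OF wm]) (use s1 in simp)
    also have "(\<lambda>x. w \<bullet> x) -` {y \<in> space (distr G borel (\<lambda>x. w \<bullet> x)). y - b > x} \<inter> space G
        = {z \<in> space G. z - a0 \<in> Bx}"
      unfolding Bx_def b_def spG by (auto simp: inner_diff_right)
    also have "measure G {z \<in> space G. z - a0 \<in> Bx} = measure G {z \<in> space G. z - a0 \<in> {y. - y \<in> Bx}}"
      using ha Bs by blast
    also have "{z \<in> space G. z - a0 \<in> {y. - y \<in> Bx}}
        = (\<lambda>x. w \<bullet> x) -` {y \<in> space (distr G borel (\<lambda>x. w \<bullet> x)). y - b < - x} \<inter> space G"
      unfolding Bx_def b_def spG by (auto simp: inner_diff_right)
    also have "measure G \<dots> = measure (distr G borel (\<lambda>x. w \<bullet> x)) {y \<in> space (distr G borel (\<lambda>x. w \<bullet> x)). y - b < - x}"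
      by (rule measure_distr[OF wm, symmetric]) (use s2 in simp)
    finally show "measure (distr G borel (\<lambda>x. w \<bullet> x)) {y \<in> space (distr G borel (\<lambda>x. w \<bullet> x)). y - b > x}
        = measure (distr G borel (\<lambda>x. w \<bullet> x)) {y \<in> space (distr G borel (\<lambda>x. w \<bullet> x)). y - b < - x}" .
  qed
qed


lemma W_nonzero: "w \<in> W_plus \<Longrightarrow> w \<noteq> 0"
  unfolding W_plus_def by auto

lemma q_nonneg: "pos_def S \<Longrightarrow> w \<bullet> (S *v w) \<ge> 0"
  using pos_def_psd[of S] unfolding psd_def qf_eq by blast

lemma lower:
  fixes S :: "real^'n^'n" and mu w :: "real^'n"
  assumes p: "pos_def S" and wW: "w \<in> W_plus"
    and F: "F \<in> L_lam t lam (w \<bullet> mu) (sqrt (w \<bullet> (S *v w)))"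
  shows "\<exists>G \<in> M_w_lam (M_set mu S) t lam w. upper_sq t F = (\<integral>\<^sup>+x. ennreal ((max (w \<bullet> x - t) 0)\<^sup>2) \<partial>G)
      \<and> (symmetric_real F \<longrightarrow> G \<in> M_w_lam (MS_set mu S) t lam w)"
proof -
  have wne: "w \<noteq> 0" by (rule W_nonzero[OF wW])
  obtain u c where wu: "w \<bullet> u = sqrt (w \<bullet> (S *v w))" and wc: "\<forall>k::'n. w \<bullet> c k = 0"
    and Sd: "\<forall>i j. S$i$j = u$i * u$j + (\<Sum>k\<in>UNIV. c k $ i * c k $ j)"
    using cov_decomp[OF p wne] by blast
  define s where "s = sqrt (w \<bullet> (S *v w))"
  have spos: "s > 0" using p wne unfolding s_def pos_def_def by simp
  have rd: "real_dist F" and m1: "(\<integral>x. x \<partial>F) = w \<bullet> mu"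
    and m2: "(\<integral>x. x\<^sup>2 \<partial>F) = (w \<bullet> mu)\<^sup>2 + s\<^sup>2" and lc: "(\<integral>x. max (-(x - t)) 0 \<partial>F) \<le> lam"
    using F unfolding L_lam_def s_def by auto
  have wu': "w \<bullet> u = s" using wu unfolding s_def .
  interpret C: constr F mu u w c S "w \<bullet> mu" s
    by (rule constr.intro[OF rd m1 m2 spos wu' wc refl Sd])
  have mx: "(\<lambda>x::real. max (-(x - t)) 0) \<in> borel_measurable borel" by (intro cont_meas continuous_intros)
  have ix: "integrable F (\<lambda>x::real. max (-(x - t)) 0)"
  proof -
    interpret FF: prob_space F using rd unfolding real_dist_def by blast
    have i1: "integrable F (\<lambda>x. x)" using rd unfolding real_dist_def by blast
    have "integrable F (\<lambda>x::real. -(x - t))" using i1 by simp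
    then show ?thesis by (rule integrable_max) simp
  qed
  have lG: "(\<integral>x. max (-(w \<bullet> x - t)) 0 \<partial>C.G) \<le> lam"
    using C.G_int[OF mx ix] lc by simp
  have pm: "(\<lambda>x::real. ennreal ((max (x - t) 0)\<^sup>2)) \<in> borel_measurable borel"
    by (intro measurable_compose[OF _ measurable_ennreal] cont_meas continuous_intros)
  have GM: "C.G \<in> M_w_lam (M_set mu S) t lam w"
    unfolding M_w_lam_def using C.G_in_M lG by simp
  moreover have "upper_sq t F = (\<integral>\<^sup>+x. ennreal ((max (w \<bullet> x - t) 0)\<^sup>2) \<partial>C.G)"
    unfolding upper_sq_def using C.G_nn[OF pm] by simp
  moreover have "symmetric_real F \<longrightarrow> C.G \<in> M_w_lam (MS_set mu S) t lam w"
    using C.G_sym C.G_in_M lG unfolding M_w_lam_def MS_set_def by simp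
  ultimately show ?thesis by blast
qed

lemma key:
  fixes S :: "real^'n^'n" and mu w :: "real^'n"
  assumes p: "pos_def S" and wW: "w \<in> W_plus"
  shows "worst_obj (M_set mu S) t lam w = h_lam lam t (w \<bullet> mu) (sqrt (w \<bullet> (S *v w)))"
    and "worst_obj (MS_set mu S) t lam w = hS_lam lam t (w \<bullet> mu) (sqrt (w \<bullet> (S *v w)))"
proof -
  have q: "w \<bullet> (S *v w) \<ge> 0" by (rule q_nonneg[OF p])
  show "worst_obj (M_set mu S) t lam w = h_lam lam t (w \<bullet> mu) (sqrt (w \<bullet> (S *v w)))"
    unfolding worst_obj_def h_lam_def
  proof (rule antisym)
    show "(SUP G\<in>M_w_lam (M_set mu S) t lam w. \<integral>\<^sup>+x. ennreal ((max (w \<bullet> x - t) 0)\<^sup>2) \<partial>G)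
        \<le> (SUP F\<in>L_lam t lam (w \<bullet> mu) (sqrt (w \<bullet> (S *v w))). upper_sq t F)"
    proof (rule SUP_least)
      fix G assume "G \<in> M_w_lam (M_set mu S) t lam w"
      then have G: "G \<in> M_set mu S" and lc: "(\<integral>x. max (-(w \<bullet> x - t)) 0 \<partial>G) \<le> lam"
        unfolding M_w_lam_def by auto
      show "(\<integral>\<^sup>+x. ennreal ((max (w \<bullet> x - t) 0)\<^sup>2) \<partial>G) \<le> (SUP F\<in>L_lam t lam (w \<bullet> mu) (sqrt (w \<bullet> (S *v w))). upper_sq t F)"
        unfolding push(2)[OF G q lc, symmetric] by (rule SUP_upper[OF push(1)[OF G q lc]])
    qed
    show "(SUP F\<in>L_lam t lam (w \<bullet> mu) (sqrt (w \<bullet> (S *v w))). upper_sq t F)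
        \<le> (SUP G\<in>M_w_lam (M_set mu S) t lam w. \<integral>\<^sup>+x. ennreal ((max (w \<bullet> x - t) 0)\<^sup>2) \<partial>G)"
    proof (rule SUP_least)
      fix F assume F: "F \<in> L_lam t lam (w \<bullet> mu) (sqrt (w \<bullet> (S *v w)))"
      obtain G where G: "G \<in> M_w_lam (M_set mu S) t lam w"
        and e: "upper_sq t F = (\<integral>\<^sup>+x. ennreal ((max (w \<bullet> x - t) 0)\<^sup>2) \<partial>G)"
        using lower[OF p wW F] by blast
      show "upper_sq t F \<le> (SUP G\<in>M_w_lam (M_set mu S) t lam w. \<integral>\<^sup>+x. ennreal ((max (w \<bullet> x - t) 0)\<^sup>2) \<partial>G)"
        unfolding e by (rule SUP_upper[OF G])
    qed
  qed
  show "worst_obj (MS_set mu S) t lam w = hS_lam lam t (w \<bullet> mu) (sqrt (w \<bullet> (S *v w)))"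
    unfolding worst_obj_def hS_lam_def
  proof (rule antisym)
    show "(SUP G\<in>M_w_lam (MS_set mu S) t lam w. \<integral>\<^sup>+x. ennreal ((max (w \<bullet> x - t) 0)\<^sup>2) \<partial>G)
        \<le> (SUP F\<in>LS_lam t lam (w \<bullet> mu) (sqrt (w \<bullet> (S *v w))). upper_sq t F)"
    proof (rule SUP_least)
      fix G assume "G \<in> M_w_lam (MS_set mu S) t lam w"
      then have G: "G \<in> M_set mu S" and lc: "(\<integral>x. max (-(w \<bullet> x - t)) 0 \<partial>G) \<le> lam"
        and sy: "symmetric_vec G"
        unfolding M_w_lam_def MS_set_def by auto
      have sG: "sets G = sets borel" using G unfolding M_set_def by auto
      have "distr G borel (\<lambda>x. w \<bullet> x) \<in> LS_lam t lam (w \<bullet> mu) (sqrt (w \<bullet> (S *v w)))"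
        unfolding LS_lam_def using push(1)[OF G q lc] push_sym[OF sG sy] by simp
      then show "(\<integral>\<^sup>+x. ennreal ((max (w \<bullet> x - t) 0)\<^sup>2) \<partial>G) \<le> (SUP F\<in>LS_lam t lam (w \<bullet> mu) (sqrt (w \<bullet> (S *v w))). upper_sq t F)"
        unfolding push(2)[OF G q lc, symmetric] by (rule SUP_upper)
    qed
    show "(SUP F\<in>LS_lam t lam (w \<bullet> mu) (sqrt (w \<bullet> (S *v w))). upper_sq t F)
        \<le> (SUP G\<in>M_w_lam (MS_set mu S) t lam w. \<integral>\<^sup>+x. ennreal ((max (w \<bullet> x - t) 0)\<^sup>2) \<partial>G)"
    proof (rule SUP_least)
      fix F assume "F \<in> LS_lam t lam (w \<bullet> mu) (sqrt (w \<bullet> (S *v w)))"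
      then have F: "F \<in> L_lam t lam (w \<bullet> mu) (sqrt (w \<bullet> (S *v w)))" and sF: "symmetric_real F"
        unfolding LS_lam_def by auto
      obtain G where G: "G \<in> M_w_lam (MS_set mu S) t lam w"
        and e: "upper_sq t F = (\<integral>\<^sup>+x. ennreal ((max (w \<bullet> x - t) 0)\<^sup>2) \<partial>G)"
        using lower[OF p wW F] sF by blast
      show "upper_sq t F \<le> (SUP G\<in>M_w_lam (MS_set mu S) t lam w. \<integral>\<^sup>+x. ennreal ((max (w \<bullet> x - t) 0)\<^sup>2) \<partial>G)"
        unfolding e by (rule SUP_upper[OF G])
    qed
  qed
qed

lemma argmin_cong: "(\<And>v. v \<in> A \<Longrightarrow> f v = g v) \<Longrightarrow> is_argmin_on f A w \<longleftrightarrow> is_argmin_on g A w"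
  unfolding is_argmin_on_def by auto

theorem proposition6:
  fixes mu :: "real^'n" and Sigma :: "real^'n^'n" and t lam :: real
  assumes "CARD('n) \<ge> 2"
    and "pos_def Sigma"
    and "lam > 0"
    and "max (- (Min (range (\<lambda>i. mu $ i)) - t)) 0 \<le> lam"
  shows "(\<forall>w. is_argmin_on (worst_obj (M_set mu Sigma) t lam) W_plus w \<longleftrightarrow>
              is_argmin_on (\<lambda>v. h_lam lam t (v \<bullet> mu) (sqrt (v \<bullet> (Sigma *v v)))) W_plus w)
       \<and> (\<forall>w. is_argmin_on (worst_obj (MS_set mu Sigma) t lam) W_plus w \<longleftrightarrow>
              is_argmin_on (\<lambda>v. hS_lam lam t (v \<bullet> mu) (sqrt (v \<bullet> (Sigma *v v)))) W_plus w)"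
proof (intro conjI allI argmin_cong)
  fix v :: "real^'n" assume v: "v \<in> W_plus"
  show "worst_obj (M_set mu Sigma) t lam v = h_lam lam t (v \<bullet> mu) (sqrt (v \<bullet> (Sigma *v v)))"
    by (rule key(1)[OF assms(2) v])
  show "worst_obj (MS_set mu Sigma) t lam v = hS_lam lam t (v \<bullet> mu) (sqrt (v \<bullet> (Sigma *v v)))"
    by (rule key(2)[OF assms(2) v])
qed


end
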